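(* Let $\Psi\in\mathcal{K}_{\mathrm{FxT}}$ and $\sigma(s)=\sum_{i=1}^nc_is^{r_i}$ with $1\le r_1<r_2<\dots<r_n$ and real $c_i\neq0$, and suppose $\sigma'(s)>0$ for all $s>0$. Then there exists $\tilde\Psi\in\mathcal{K}_{\mathrm{FxT}}$ such that $\tilde\Psi(\sigma(s))\le\Psi(s)\sigma'(s)$ for all $s>0$.
   Context: $\mathcal{K}_{\mathrm{FxT}}$ denotes the set of functions $\alpha:\mathbb{R}_{\ge0}\to\mathbb{R}_{\ge0}$ of the form $\alpha(s)=c_1s^{p_1}+c_2s^{p_2}$ with $c_1,c_2>0$, $p_1\in(0,1)$ and $p_2>1$. *)

theory Defs
  imports "HOL-Analysis.Analysis"
begin

text \<open>K_FxT: functions on the nonnegative reals of the form c1 s^p1 + c2 s^p2 with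
  c1, c2 > 0, 0 < p1 < 1, p2 > 1. Functions are total in HOL; membership only
  constrains their values on s \<ge> 0.\<close>
definition K_FxT :: "(real \<Rightarrow> real) set" where
  "K_FxT = {\<alpha>. \<exists>c1 c2 p1 p2. c1 > 0 \<and> c2 > 0 \<and> 0 < p1 \<and> p1 < 1 \<and> p2 > 1 \<and>
              (\<forall>s\<ge>0. \<alpha> s = c1 * s powr p1 + c2 * s powr p2)}"

end

theory Submission
  imports Defs
begin

lemma sum_powr_lim0:
  fixes f e :: "nat \<Rightarrow> real"
  assumes "1 \<le> n" "e 1 = 0" "\<forall>i\<in>{1..n}. i \<noteq> 1 \<longrightarrow> e i > 0"
  shows "((\<lambda>s. \<Sum>i=1..n. f i * s powr e i) \<longlongrightarrow> f 1) (at_right 0)"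
proof -
  have "((\<lambda>s. \<Sum>i=1..n. f i * s powr e i) \<longlongrightarrow> (\<Sum>i=1..n. if i = 1 then f 1 else 0)) (at_right 0)"
  proof (rule tendsto_sum)
    fix i assume i: "i \<in> {1..n}"
    show "((\<lambda>s. f i * s powr e i) \<longlongrightarrow> (if i = 1 then f 1 else 0)) (at_right 0)"
    proof (cases "i = 1")
      case True
      have "eventually (\<lambda>s. f 1 = f i * s powr e i) (at_right (0::real))"
        using eventually_at_right_less[of "0::real"]
        by (rule eventually_mono) (use True assms(2) in auto)
      then show ?thesis using True by (auto intro: Lim_transform_eventually)
    next
      case False
      then have ep: "e i > 0" using assms(3) i by auto
      have "((\<lambda>s. s powr e i) \<longlongrightarrow> 0) (at_right (0::real))"
        by (rule tendsto_zero_powrI[of _ _ _ "e i"])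
           (auto simp: ep eventually_at_right_less intro!: tendsto_ident_at eventually_mono[OF eventually_at_right_less[of "0::real"]])
      then have "((\<lambda>s. f i * s powr e i) \<longlongrightarrow> f i * 0) (at_right (0::real))"
        by (intro tendsto_mult tendsto_const)
      then show ?thesis using False by simp
    qed
  qed
  then show ?thesis using assms(1) by simp
qed

lemma sum_powr_limtop:
  fixes f e :: "nat \<Rightarrow> real"
  assumes "1 \<le> n" "e n = 0" "\<forall>i\<in>{1..n}. i \<noteq> n \<longrightarrow> e i < 0"
  shows "((\<lambda>s. \<Sum>i=1..n. f i * s powr e i) \<longlongrightarrow> f n) at_top"
proof -
  have "((\<lambda>s. \<Sum>i=1..n. f i * s powr e i) \<longlongrightarrow> (\<Sum>i=1..n. if i = n then f n else 0)) at_top"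
  proof (rule tendsto_sum)
    fix i assume i: "i \<in> {1..n}"
    show "((\<lambda>s. f i * s powr e i) \<longlongrightarrow> (if i = n then f n else 0)) at_top"
    proof (cases "i = n")
      case True
      have "eventually (\<lambda>s. f n = f i * s powr e i) (at_top::real filter)"
        using eventually_gt_at_top[of "0::real"]
        by (rule eventually_mono) (use True assms(2) in auto)
      then show ?thesis using True by (auto intro: Lim_transform_eventually)
    next
      case False
      then have ep: "e i < 0" using assms(3) i by auto
      have "((\<lambda>s. s powr e i) \<longlongrightarrow> 0) (at_top::real filter)"
        by (rule tendsto_neg_powr[OF ep filterlim_ident])
      then have "((\<lambda>s. f i * s powr e i) \<longlongrightarrow> f i * 0) (at_top::real filter)"
        by (intro tendsto_mult tendsto_const)
      then show ?thesis using False by simp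
    qed
  qed
  then show ?thesis using assms(1) by simp
qed

lemma alg_ratio:
  fixes s A r B p q q' Sv Dv :: real
  assumes "s > 0" "A > 0" "r > 0" "Sv = s powr r * A" "Dv = s powr (r - 1) * B"
    "q = (p + r - 1) / r"
  shows "s powr p * Dv / (Sv powr q + Sv powr q') =
         B / (A powr q * (1 + s powr (r * (q' - q)) * A powr (q' - q)))"
proof -
  have Sq: "Sv powr q = s powr (p + r - 1) * A powr q"
    using assms by (simp add: powr_mult powr_powr)
  have Sq2: "Sv powr (q' - q) = s powr (r * (q' - q)) * A powr (q' - q)"
    using assms by (simp add: powr_mult powr_powr)
  have Sq': "Sv powr q' = Sv powr q * Sv powr (q' - q)"
    by (simp add: powr_add[symmetric])
  have num: "s powr p * Dv = s powr (p + r - 1) * B"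
    unfolding add_diff_eq[symmetric] using assms(5) by (simp add: powr_add mult.assoc)
  have "Sv powr q + Sv powr q' = s powr (p + r - 1) * (A powr q * (1 + s powr (r * (q' - q)) * A powr (q' - q)))"
    unfolding Sq' Sq2 Sq by (simp add: algebra_simps)
  then show ?thesis unfolding num using assms(1) by simp
qed

theorem lemma5:
  fixes \<Psi> :: "real \<Rightarrow> real" and n :: nat and c r :: "nat \<Rightarrow> real"
  assumes "\<Psi> \<in> K_FxT"
    and "n \<ge> 1"
    and "1 \<le> r 1"
    and "\<forall>i j. 1 \<le> i \<longrightarrow> i < j \<longrightarrow> j \<le> n \<longrightarrow> r i < r j"
    and "\<forall>i\<in>{1..n}. c i \<noteq> 0"
    and "\<forall>s>0. deriv (\<lambda>t. \<Sum>i=1..n. c i * t powr r i) s > 0"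
  shows "\<exists>\<Psi>' \<in> K_FxT. \<forall>s>0.
           \<Psi>' (\<Sum>i=1..n. c i * s powr r i) \<le> \<Psi> s * deriv (\<lambda>t. \<Sum>i=1..n. c i * t powr r i) s"
proof -
  obtain a1 a2 p1 p2 where a1: "a1 > 0" and a2: "a2 > 0" and p1: "0 < p1" "p1 < 1" and p2: "p2 > 1"
    and Psi: "\<forall>s\<ge>0. \<Psi> s = a1 * s powr p1 + a2 * s powr p2"
    using assms(1) unfolding K_FxT_def by blast
  define S where "S = (\<lambda>t. \<Sum>i=1..n. c i * t powr r i)"
  define D where "D = (\<lambda>t. \<Sum>i=1..n. c i * r i * t powr (r i - 1))"
  have r1: "r 1 > 0" using assms(3) by simp
  have rge: "r 1 \<le> r i" if "i \<in> {1..n}" for i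
    using assms(4) that by (cases "i = 1") (auto, metis le_less)
  have rgt: "r 1 < r i" if "i \<in> {1..n}" "i \<noteq> 1" for i
    using assms(4) that by auto
  have rle: "r i \<le> r n" if "i \<in> {1..n}" for i
    using assms(4) that by (cases "i = n") (auto, metis le_less)
  have rlt: "r i < r n" if "i \<in> {1..n}" "i \<noteq> n" for i
    using assms(4) that by auto
  have rn: "r n > 0" using rge[of n] r1 assms(2) by auto
  have derS: "(S has_real_derivative D s) (at s)" if "s > 0" for s
    unfolding S_def D_def
  proof (rule DERIV_sum)
    fix i
    show "((\<lambda>t. c i * t powr r i) has_real_derivative c i * r i * s powr (r i - 1)) (at s)"
      using DERIV_cmult[OF has_real_derivative_powr[OF that, of "r i"], of "c i"]
      by (simp add: mult.assoc)
  qed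
  have Dpos: "D s > 0" if "s > 0" for s
  proof -
    have "deriv S s = D s" using derS[OF that] by (rule DERIV_imp_deriv)
    then show ?thesis using assms(6) that unfolding S_def by auto
  qed
  define A0 where "A0 = (\<lambda>s. \<Sum>i=1..n. c i * s powr (r i - r 1))"
  define B0 where "B0 = (\<lambda>s. \<Sum>i=1..n. (c i * r i) * s powr (r i - r 1))"
  define A1 where "A1 = (\<lambda>s. \<Sum>i=1..n. c i * s powr (r i - r n))"
  define B1 where "B1 = (\<lambda>s. \<Sum>i=1..n. (c i * r i) * s powr (r i - r n))"
  have SA0: "S s = s powr r 1 * A0 s" if "s > 0" for s
    unfolding S_def A0_def sum_distrib_left
    by (rule sum.cong) (auto simp: powr_add[symmetric] algebra_simps)
  have DB0: "D s = s powr (r 1 - 1) * B0 s" if "s > 0" for s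
    unfolding D_def B0_def sum_distrib_left
    by (rule sum.cong) (auto simp: powr_add[symmetric] algebra_simps)
  have SA1: "S s = s powr r n * A1 s" if "s > 0" for s
    unfolding S_def A1_def sum_distrib_left
    by (rule sum.cong) (auto simp: powr_add[symmetric] algebra_simps)
  have DB1: "D s = s powr (r n - 1) * B1 s" if "s > 0" for s
    unfolding D_def B1_def sum_distrib_left
    by (rule sum.cong) (auto simp: powr_add[symmetric] algebra_simps)
  have A0lim: "(A0 \<longlongrightarrow> c 1) (at_right 0)"
    unfolding A0_def by (rule sum_powr_lim0) (use assms(2) rgt in auto)
  have B0lim: "(B0 \<longlongrightarrow> c 1 * r 1) (at_right 0)"
    unfolding B0_def by (rule sum_powr_lim0[where f = "\<lambda>i. c i * r i"]) (use assms(2) rgt in auto)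
  have A1lim: "(A1 \<longlongrightarrow> c n) at_top"
    unfolding A1_def by (rule sum_powr_limtop) (use assms(2) rlt in auto)
  have B1lim: "(B1 \<longlongrightarrow> c n * r n) at_top"
    unfolding B1_def by (rule sum_powr_limtop[where f = "\<lambda>i. c i * r i"]) (use assms(2) rlt in auto)
  have ev0: "eventually (\<lambda>s. s > 0) (at_right (0::real))"
    by (rule eventually_at_right_less)
  have evt: "eventually (\<lambda>s. s > 0) (at_top::real filter)"
    by (rule eventually_gt_at_top)
  have "c 1 * r 1 \<ge> 0"
  proof (rule tendsto_lowerbound[OF B0lim])
    show "eventually (\<lambda>s. 0 \<le> B0 s) (at_right 0)"
      using ev0
    proof (rule eventually_mono)
      fix s :: real assume s: "s > 0"
      have "0 < s powr (r 1 - 1) * B0 s" using Dpos[OF s] DB0[OF s] by simp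
      then show "0 \<le> B0 s" using s by (simp add: zero_less_mult_iff)
    qed
  qed simp
  moreover have "c 1 \<noteq> 0" using assms(5) assms(2) by auto
  ultimately have c1: "c 1 > 0" using r1 zero_le_mult_iff[of "c 1" "r 1"] by auto
  have "c n * r n \<ge> 0"
  proof (rule tendsto_lowerbound[OF B1lim])
    show "eventually (\<lambda>s. 0 \<le> B1 s) at_top"
      using evt
    proof (rule eventually_mono)
      fix s :: real assume s: "s > 0"
      have "0 < s powr (r n - 1) * B1 s" using Dpos[OF s] DB1[OF s] by simp
      then show "0 \<le> B1 s" using s by (simp add: zero_less_mult_iff)
    qed
  qed simp
  moreover have "c n \<noteq> 0" using assms(5) assms(2) by auto
  ultimately have cn: "c n > 0" using rn zero_le_mult_iff[of "c n" "r n"] by auto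
  have A0pos: "eventually (\<lambda>s. A0 s > 0) (at_right 0)"
    using order_tendstoD(1)[OF A0lim c1] .
  have A1pos: "eventually (\<lambda>s. A1 s > 0) at_top"
    using order_tendstoD(1)[OF A1lim cn] .
  have Spos: "S s > 0" if s: "s > 0" for s
  proof -
    obtain b where b: "b > 0" "\<forall>y>0. y < b \<longrightarrow> A0 y > 0"
      using A0pos unfolding eventually_at_right_field by auto
    define e where "e = min (b/2) (s/2)"
    have e: "e > 0" "e < b" "e < s" using b s unfolding e_def by auto
    have "S e > 0" using SA0[OF e(1)] b(2) e by simp
    also have "S e < S s"
      by (rule DERIV_pos_imp_increasing[OF e(3)]) (use e(1) in \<open>meson derS Dpos less_le_trans\<close>)
    finally show ?thesis .
  qed
  define q1 where "q1 = (p1 + r 1 - 1) / r 1"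
  define q2 where "q2 = (p2 + r n - 1) / r n"
  have q1: "0 < q1" "q1 < 1" using p1 r1 assms(3) unfolding q1_def by (auto simp: field_simps)
  have q2: "q2 > 1" using p2 rn unfolding q2_def by (auto simp: field_simps)
  define T where "T = (\<lambda>s. S s powr q1 + S s powr q2)"
  define R where "R = (\<lambda>s. \<Psi> s * D s / T s)"
  have Tpos: "T s > 0" if "s > 0" for s using Spos[OF that] unfolding T_def by (simp add: add_pos_pos)
  have Rge1: "R s \<ge> a1 * (s powr p1 * D s / T s)" if s: "s > 0" for s
  proof -
    have "a1 * s powr p1 \<le> \<Psi> s" using Psi s a2 by simp
    then have "a1 * s powr p1 * D s \<le> \<Psi> s * D s" using Dpos[OF s] by (simp add: mult_right_mono)
    then show ?thesis unfolding R_def using Tpos[OF s] by (simp add: divide_right_mono mult.assoc)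
  qed
  have Rge2: "R s \<ge> a2 * (s powr p2 * D s / T s)" if s: "s > 0" for s
  proof -
    have "a2 * s powr p2 \<le> \<Psi> s" using Psi s a1 by simp
    then have "a2 * s powr p2 * D s \<le> \<Psi> s * D s" using Dpos[OF s] by (simp add: mult_right_mono)
    then show ?thesis unfolding R_def using Tpos[OF s] by (simp add: divide_right_mono mult.assoc)
  qed
  define L0 where "L0 = c 1 * r 1 / (c 1 powr q1 * (1 + 0 * c 1 powr (q2 - q1)))"
  define L1 where "L1 = c n * r n / (c n powr q2 * (1 + 0 * c n powr (q1 - q2)))"
  have L0pos: "L0 > 0" unfolding L0_def using c1 r1 by simp
  have L1pos: "L1 > 0" unfolding L1_def using cn rn by simp
  have lim0: "((\<lambda>s. B0 s / (A0 s powr q1 * (1 + s powr (r 1 * (q2 - q1)) * A0 s powr (q2 - q1)))) \<longlongrightarrow> L0) (at_right 0)"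
    unfolding L0_def
  proof (intro tendsto_intros B0lim A0lim)
    show "((\<lambda>s. s powr (r 1 * (q2 - q1))) \<longlongrightarrow> 0) (at_right (0::real))"
      by (rule tendsto_zero_powrI[of _ _ _ "r 1 * (q2 - q1)"])
         (use q1 q2 r1 ev0 in \<open>auto intro!: tendsto_ident_at elim: eventually_mono\<close>)
  qed (use c1 r1 in auto)
  have lim1: "((\<lambda>s. B1 s / (A1 s powr q2 * (1 + s powr (r n * (q1 - q2)) * A1 s powr (q1 - q2)))) \<longlongrightarrow> L1) at_top"
    unfolding L1_def
  proof (intro tendsto_intros B1lim A1lim)
    show "((\<lambda>s. s powr (r n * (q1 - q2))) \<longlongrightarrow> 0) (at_top::real filter)"
      by (rule tendsto_neg_powr[OF _ filterlim_ident]) (use q1 q2 rn in \<open>simp add: mult_pos_neg\<close>)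
  qed (use cn rn in auto)
  have half0: "L0/2 < L0" and half1: "L1/2 < L1" using L0pos L1pos by simp_all
  have ev0R: "eventually (\<lambda>s. R s \<ge> a1 * (L0 / 2)) (at_right 0)"
    using order_tendstoD(1)[OF lim0 half0] ev0 A0pos
  proof (eventually_elim)
    case (elim s)
    have eq: "s powr p1 * D s / T s = B0 s / (A0 s powr q1 * (1 + s powr (r 1 * (q2 - q1)) * A0 s powr (q2 - q1)))"
      unfolding T_def by (rule alg_ratio) (use elim r1 SA0 DB0 q1_def in auto)
    have "L0/2 < s powr p1 * D s / T s" using elim(1) by (simp only: eq)
    then have "a1 * (L0/2) \<le> a1 * (s powr p1 * D s / T s)" by (rule mult_left_mono[OF less_imp_le]) (use a1 in auto)
    then show ?case using Rge1[of s] elim by linarith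
  qed
  have ev1R: "eventually (\<lambda>s. R s \<ge> a2 * (L1 / 2)) at_top"
    using order_tendstoD(1)[OF lim1 half1] evt A1pos
  proof (eventually_elim)
    case (elim s)
    have eq: "s powr p2 * D s / (S s powr q2 + S s powr q1) = B1 s / (A1 s powr q2 * (1 + s powr (r n * (q1 - q2)) * A1 s powr (q1 - q2)))"
      by (rule alg_ratio) (use elim rn SA1 DB1 q2_def in auto)
    have "L1/2 < s powr p2 * D s / T s" using elim(1) unfolding T_def add.commute[of "S s powr q1"] by (simp only: eq)
    then have "a2 * (L1/2) \<le> a2 * (s powr p2 * D s / T s)" by (rule mult_left_mono[OF less_imp_le]) (use a2 in auto)
    then show ?case using Rge2[of s] elim by linarith
  qed
  define m0 where "m0 = a1 * (L0 / 2)"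
  define m1 where "m1 = a2 * (L1 / 2)"
  have m0: "m0 > 0" and m1: "m1 > 0" unfolding m0_def m1_def using a1 a2 L0pos L1pos by auto
  obtain b where b: "b > 0" "\<forall>y>0. y < b \<longrightarrow> R y \<ge> m0"
    using ev0R unfolding eventually_at_right_field m0_def by auto
  obtain N where N: "\<forall>s\<ge>N. R s \<ge> m1"
    using ev1R unfolding eventually_at_top_linorder m1_def by auto
  define d where "d = b / 2"
  define M where "M = max N d"
  have d: "d > 0" "d < b" using b unfolding d_def by auto
  have sub: "s > 0" if "s \<in> {d..M}" for s using that d by auto
  have cS: "continuous_on {d..M} S"
    unfolding S_def by (intro continuous_intros) (use sub in force)
  have cD: "continuous_on {d..M} D"
    unfolding D_def by (intro continuous_intros) (use sub in force)
  have cT: "continuous_on {d..M} T"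
    unfolding T_def by (intro continuous_intros cS) (use sub Spos in force)+
  have cR: "continuous_on {d..M} R"
  proof -
    have "continuous_on {d..M} (\<lambda>s. (a1 * s powr p1 + a2 * s powr p2) * D s / T s)"
      by (intro continuous_intros cD cT) (use sub Tpos in force)+
    then show ?thesis
      by (rule continuous_on_cong[THEN iffD1, rotated 2]) (use sub Psi R_def in \<open>auto simp: less_imp_le\<close>)
  qed
  obtain xm where xm: "xm \<in> {d..M}" "\<forall>y\<in>{d..M}. R xm \<le> R y"
    using continuous_attains_inf[OF compact_Icc _ cR] d unfolding M_def by auto
  have xmpos: "xm > 0" using sub xm(1) by auto
  have "\<Psi> xm > 0" using Psi xmpos a1 a2 by (simp add: add_pos_pos)
  then have mm: "R xm > 0" unfolding R_def using Dpos[OF xmpos] Tpos[OF xmpos] by simp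
  define m where "m = min m0 (min m1 (R xm))"
  have m: "m > 0" using m0 m1 mm unfolding m_def by simp
  have Rm: "R s \<ge> m" if s: "s > 0" for s
  proof (cases "s < b")
    case True then show ?thesis using b s unfolding m_def by force
  next
    case False
    show ?thesis
    proof (cases "s \<ge> N")
      case True then show ?thesis using N unfolding m_def by force
    next
      case False
      then have "s \<in> {d..M}" using \<open>\<not> s < b\<close> d unfolding M_def by auto
      then show ?thesis using xm(2) unfolding m_def by force
    qed
  qed
  show ?thesis
  proof (rule bexI[of _ "\<lambda>x. m * x powr q1 + m * x powr q2"])
    show "(\<lambda>x. m * x powr q1 + m * x powr q2) \<in> K_FxT"
      unfolding K_FxT_def using m q1 q2 by auto
    show "\<forall>s>0. m * (\<Sum>i = 1..n. c i * s powr r i) powr q1 + m * (\<Sum>i = 1..n. c i * s powr r i) powr q2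
          \<le> \<Psi> s * deriv (\<lambda>t. \<Sum>i = 1..n. c i * t powr r i) s"
    proof (intro allI impI)
      fix s :: real assume s: "s > 0"
      have dd: "deriv (\<lambda>t. \<Sum>i = 1..n. c i * t powr r i) s = D s"
        using DERIV_imp_deriv[OF derS[OF s]] unfolding S_def .
      have "m \<le> \<Psi> s * D s / T s" using Rm[OF s] unfolding R_def .
      then have "m * T s \<le> \<Psi> s * D s" using Tpos[OF s] by (simp add: pos_le_divide_eq)
      then show "m * (\<Sum>i = 1..n. c i * s powr r i) powr q1 + m * (\<Sum>i = 1..n. c i * s powr r i) powr q2
          \<le> \<Psi> s * deriv (\<lambda>t. \<Sum>i = 1..n. c i * t powr r i) s"
        unfolding dd T_def S_def by (simp add: algebra_simps)
    qed
  qed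
qed
end
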